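(* Let $\theta_i\in(0,2)$, $\alpha_i>0$, $\gamma_i>0$ and $0<\gamma_i\beta<1/\lambda_{\max}(L)$ for all $i=1,\dots,m$. Then the matrices $\mathbf H=QM^{-1}$ and $\mathbf D=Q^\top+Q-M^\top\mathbf HM$ satisfy $\mathbf H\succcurlyeq\mathbf D\succ0$.
   Context: Let $m\ge2$, $n_1,\dots,n_m\ge1$, $p,q\ge0$ integers, $n=\sum_in_i$. $L\in\mathbb R^{m\times m}$ satisfies $L=U^\top U$ with $U\in\mathbb R^{r\times m}$ of full row rank and $U\mathbf 1_m=0$ (and $L$ is compatible with a connected undirected graph on $m$ nodes, with $\mathrm{null}(L)=\mathrm{span}\{\mathbf 1_m\}$). $\mathbf U=U\otimes I_{p+q}$. Parameters $\theta_i,\alpha_i,\gamma_i>0$, $\beta>0$; $\Theta=\mathrm{diag}(\theta_1I_{n_1},\dots,\theta_mI_{n_m})$, $\Upsilon=\mathrm{diag}(\alpha_1I_{n_1},\dots,\alpha_mI_{n_m})$, $\Gamma=\mathrm{diag}(\gamma_1I_{p+q},\dots,\gamma_mI_{p+q})$; $Q=\begin{pmatrix}\Upsilon^{-1}&0&0\\0&\Gamma^{-1}&-\mathbf U^\top\\0&0&\frac1\beta I_{r(p+q)}\end{pmatrix}$, $M=\begin{pmatrix}\Theta&0&0\\0&I_{m(p+q)}&-\Gamma\mathbf U^\top\\0&0&I_{r(p+q)}\end{pmatrix}$. $A\succcurlyeq B$ means $A-B$ is symmetric positive semidefinite; $\succ0$ means symmetric positive definite. *)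

theory Defs
  imports "Jordan_Normal_Form.Matrix" "Jordan_Normal_Form.Char_Poly"
    "Jordan_Normal_Form.Gauss_Jordan_Elimination" "Jordan_Normal_Form.DL_Rank"
    "Jordan_Normal_Form.Matrix_Kernel"
begin

definition kron :: "'a :: semiring_0 mat \<Rightarrow> 'a mat \<Rightarrow> 'a mat" where
  "kron A B = mat (dim_row A * dim_row B) (dim_col A * dim_col B)
     (\<lambda>(i, j). A $$ (i div dim_row B, j div dim_col B) * B $$ (i mod dim_row B, j mod dim_col B))"

text \<open>3x3 block matrix built from nine blocks (row-major).\<close>
definition block3 :: "'a :: zero mat \<Rightarrow> 'a mat \<Rightarrow> 'a mat \<Rightarrow> 'a mat \<Rightarrow> 'a mat \<Rightarrow> 'a mat
     \<Rightarrow> 'a mat \<Rightarrow> 'a mat \<Rightarrow> 'a mat \<Rightarrow> 'a mat" where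
  "block3 A11 A12 A13 A21 A22 A23 A31 A32 A33 =
     four_block_mat A11
       (four_block_mat A12 A13 (0\<^sub>m 0 (dim_col A12)) (0\<^sub>m 0 (dim_col A13)))
       (four_block_mat A21 (0\<^sub>m (dim_row A21) 0) A31 (0\<^sub>m (dim_row A31) 0))
       (four_block_mat A22 A23 A32 A33)"

text \<open>Inverse of a square matrix (meaningful when it is invertible).\<close>
definition mat_inv :: "'a :: field mat \<Rightarrow> 'a mat" where
  "mat_inv A = the (mat_inverse A)"

definition psd :: "real mat \<Rightarrow> bool" where
  "psd A \<longleftrightarrow> square_mat A \<and> transpose_mat A = A \<and>
     (\<forall>v \<in> carrier_vec (dim_row A). 0 \<le> v \<bullet> (A *\<^sub>v v))"

definition pd :: "real mat \<Rightarrow> bool" where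
  "pd A \<longleftrightarrow> square_mat A \<and> transpose_mat A = A \<and>
     (\<forall>v \<in> carrier_vec (dim_row A). v \<noteq> 0\<^sub>v (dim_row A) \<longrightarrow> 0 < v \<bullet> (A *\<^sub>v v))"

definition loewner_ge :: "real mat \<Rightarrow> real mat \<Rightarrow> bool" where
  "loewner_ge A B \<longleftrightarrow> dim_row A = dim_row B \<and> dim_col A = dim_col B \<and> psd (A - B)"

definition lambda_max :: "real mat \<Rightarrow> real" where
  "lambda_max A = Max {k. eigenvalue A k}"

end

theory Submission
  imports Defs "HOL-Analysis.Function_Topology"
begin

lemma quad_nonpos_imp_zero:
  fixes a b :: real
  assumes "\<forall>t. 2 * t * a + t^2 * b \<le> 0"
  shows "a = 0"
proof -
  define c where "c = abs b + 1"
  have c: "c > 0" unfolding c_def by simp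
  have "2 * (a / c) * a + (a / c)^2 * b \<le> 0" using assms by blast
  hence "c^2 * (2 * (a / c) * a + (a / c)^2 * b) \<le> 0"
    by (simp add: mult_nonneg_nonpos)
  moreover have "c^2 * (2 * (a / c) * a + (a / c)^2 * b) = 2 * c * a^2 + a^2 * b"
    using c by (simp add: field_simps power2_eq_square)
  ultimately have "2 * c * a^2 + a^2 * b \<le> 0" by simp
  hence "a^2 * (2 * c + b) \<le> 0" by (simp add: algebra_simps)
  moreover have "2 * c + b > 0" unfolding c_def by (cases "b \<ge> 0") auto
  ultimately have "a^2 \<le> 0" by (simp add: mult_le_0_iff)
  thus ?thesis by simp
qed

lemma compact_box_sphere:
  "compact {f::nat\<Rightarrow>real. (\<forall>i. f i \<in> (if i < k then {-1..1} else {0})) \<and> (\<Sum>i<k. (f i)^2) = 1}"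
proof -
  have c1: "compact (PiE UNIV (\<lambda>i::nat. if i < k then {-1..1::real} else {0}))"
  proof -
    have "compactin (product_topology (\<lambda>i. euclidean) UNIV) (PiE UNIV (\<lambda>i::nat. if i < k then {-1..1::real} else {0}))"
      by (subst compactin_PiE) (auto simp: compactin_euclidean_iff)
    thus ?thesis by (simp add: euclidean_product_topology compactin_euclidean_iff)
  qed
  have c2: "closed {f::nat\<Rightarrow>real. (\<Sum>i<k. (f i)^2) = 1}"
    by (intro closed_Collect_eq continuous_intros continuous_on_product_then_coordinatewise continuous_on_id)
  have eq: "{f::nat\<Rightarrow>real. (\<forall>i. f i \<in> (if i < k then {-1..1} else {0})) \<and> (\<Sum>i<k. (f i)^2) = 1}
     = PiE UNIV (\<lambda>i::nat. if i < k then {-1..1::real} else {0}) \<inter> {f. (\<Sum>i<k. (f i)^2) = 1}"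
    by (auto simp: PiE_def Pi_def)
  show ?thesis unfolding eq by (rule compact_Int_closed[OF c1 c2])
qed

lemma cont_coord: "continuous_on S (\<lambda>x::nat\<Rightarrow>real. x i)"
  by (rule continuous_on_subset[OF continuous_on_product_coordinates]) simp

lemma rayleigh_fun:
  fixes a :: "nat \<Rightarrow> nat \<Rightarrow> real"
  assumes sym: "\<And>i j. a i j = a j i" and k: "k > 0"
  shows "\<exists>f \<mu>. (\<Sum>i<k. (f i)^2) = 1 \<and> (\<forall>i<k. (\<Sum>j<k. a i j * f j) = \<mu> * f i)
     \<and> (\<forall>g. (\<Sum>i<k. \<Sum>j<k. g i * a i j * g j) \<le> \<mu> * (\<Sum>i<k. (g i)^2))"
proof -
  define S where "S = {f::nat\<Rightarrow>real. (\<forall>i. f i \<in> (if i < k then {-1..1} else {0})) \<and> (\<Sum>i<k. (f i)^2) = 1}"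
  define F where "F g = (\<Sum>i<k. \<Sum>j<k. g i * a i j * g j)" for g :: "nat \<Rightarrow> real"
  define N where "N g = (\<Sum>i<k. (g i)^2)" for g :: "nat \<Rightarrow> real"
  define B where "B g f = (\<Sum>i<k. \<Sum>j<k. g i * a i j * f j)" for g f :: "nat \<Rightarrow> real"
  have cS: "compact S" unfolding S_def by (rule compact_box_sphere)
  have "(\<Sum>i<k. (if i = 0 then 1 else 0::real)^2) = (\<Sum>i<k. if i = 0 then 1 else 0)"
    by (intro sum.cong) auto
  also have "\<dots> = 1" using k by simp
  finally have "(\<lambda>i. if i = 0 then 1 else 0::real) \<in> S" unfolding S_def
    using k by auto
  hence ne: "S \<noteq> {}" by blast
  have cF: "continuous_on S F" unfolding F_def
    by (intro continuous_intros cont_coord)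
  obtain f0 where f0S: "f0 \<in> S" and f0max: "\<And>g. g \<in> S \<Longrightarrow> F g \<le> F f0"
    using continuous_attains_sup[OF cS ne cF] by blast
  define \<mu> where "\<mu> = F f0"
  have Nf0: "N f0 = 1" using f0S unfolding S_def N_def by simp
  have claim1: "F g \<le> \<mu> * N g" for g
  proof (cases "N g = 0")
    case True
    hence "\<forall>i\<in>{..<k}. (g i)^2 = 0" unfolding N_def
      by (subst sum_nonneg_eq_0_iff[symmetric]) auto
    hence "F g = 0" unfolding F_def by simp
    thus ?thesis using True by simp
  next
    case False
    have "N g \<ge> 0" unfolding N_def by (simp add: sum_nonneg)
    with False have s: "N g > 0" by simp
    define h where "h i = (if i < k then g i / sqrt (N g) else 0)" for i
    have Nh: "N h = 1"
    proof -
      have "N h = (\<Sum>i<k. (g i)^2 / N g)" using s unfolding N_def h_def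
        by (intro sum.cong) (auto simp: power_divide)
      also have "\<dots> = N g / N g" unfolding N_def by (rule sum_divide_distrib[symmetric])
      finally show ?thesis using s by simp
    qed
    have "h \<in> S"
    proof -
      have habs: "\<bar>h i\<bar> \<le> 1" if "i < k" for i
      proof -
        have "(h i)^2 \<le> N h" unfolding N_def
          by (rule member_le_sum) (use that in auto)
        hence "(h i)^2 \<le> 1" using Nh by simp
        thus ?thesis by (simp add: abs_square_le_1)
      qed
      have "h i \<in> (if i < k then {-1..1} else {0})" for i
      proof (cases "i < k")
        case True
        hence "\<bar>h i\<bar> \<le> 1" by (rule habs)
        thus ?thesis using True by (auto simp: abs_le_iff)
      qed (simp add: h_def)
      thus ?thesis using Nh unfolding S_def N_def by blast
    qed
    hence "F h \<le> \<mu>" using f0max \<mu>_def by blast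
    moreover have "F h = F g / N g" unfolding F_def h_def using s
      by (simp add: sum_divide_distrib field_simps)
    ultimately have "F g / N g \<le> \<mu>" by simp
    thus ?thesis using s by (simp add: divide_le_eq mult.commute)
  qed
  have expF: "F (\<lambda>i. f0 i + t * g i) = F f0 + 2 * t * B g f0 + t^2 * F g" for t g
  proof -
    have swap: "B f0 g = B g f0" unfolding B_def
      by (subst sum.swap) (simp add: sym mult.commute mult.left_commute)
    have "F (\<lambda>i. f0 i + t * g i) = F f0 + t * B f0 g + t * B g f0 + t^2 * F g"
      unfolding F_def B_def
      by (simp add: algebra_simps sum.distrib sum_distrib_left power2_eq_square)
    thus ?thesis using swap by simp
  qed
  have expN: "N (\<lambda>i. f0 i + t * g i) = N f0 + 2 * t * (\<Sum>i<k. g i * f0 i) + t^2 * N g" for t g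
    unfolding N_def
    by (simp add: algebra_simps sum.distrib sum_distrib_left power2_eq_square)
  have crit: "B g f0 = \<mu> * (\<Sum>i<k. g i * f0 i)" for g
  proof -
    have "\<forall>t. 2 * t * (B g f0 - \<mu> * (\<Sum>i<k. g i * f0 i)) + t^2 * (F g - \<mu> * N g) \<le> 0"
    proof
      fix t
      have "F (\<lambda>i. f0 i + t * g i) \<le> \<mu> * N (\<lambda>i. f0 i + t * g i)" by (rule claim1)
      thus "2 * t * (B g f0 - \<mu> * (\<Sum>i<k. g i * f0 i)) + t^2 * (F g - \<mu> * N g) \<le> 0"
        unfolding expF expN Nf0 \<mu>_def[symmetric] by (simp add: algebra_simps)
    qed
    from quad_nonpos_imp_zero[OF this] show ?thesis by simp
  qed
  define e where "e i = (\<Sum>j<k. a i j * f0 j) - \<mu> * f0 i" for i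
  have "B e f0 = \<mu> * (\<Sum>i<k. e i * f0 i)" by (rule crit)
  hence "(\<Sum>i<k. e i * ((\<Sum>j<k. a i j * f0 j) - \<mu> * f0 i)) = 0"
    unfolding B_def by (simp add: sum_distrib_left sum_subtractf algebra_simps)
  hence "(\<Sum>i<k. (e i)^2) = 0" unfolding e_def power2_eq_square .
  hence "\<forall>i\<in>{..<k}. (e i)^2 = 0"
    by (subst sum_nonneg_eq_0_iff[symmetric]) auto
  hence eig: "\<forall>i<k. (\<Sum>j<k. a i j * f0 j) = \<mu> * f0 i" unfolding e_def by simp
  show ?thesis
    by (rule exI[of _ f0], rule exI[of _ \<mu>]) (use Nf0 eig claim1 in \<open>auto simp: N_def F_def\<close>)
qed

lemma finite_eigenvalues:
  fixes A :: "real mat"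
  assumes A: "A \<in> carrier_mat k k"
  shows "finite {x. eigenvalue A x}"
proof -
  have "char_poly A \<noteq> 0" using degree_monic_char_poly[OF A] by auto
  hence "finite {x. poly (char_poly A) x = 0}" by (rule poly_roots_finite)
  thus ?thesis using eigenvalue_root_char_poly[OF A] by simp
qed

lemma quad_form_sum:
  fixes A :: "real mat"
  assumes A: "A \<in> carrier_mat k k" and y: "y \<in> carrier_vec k"
  shows "y \<bullet> (A *\<^sub>v y) = (\<Sum>i<k. \<Sum>j<k. y $ i * A $$ (i,j) * y $ j)"
  using A y
  by (auto simp: scalar_prod_def mult_mat_vec_def row_def sum_distrib_left atLeast0LessThan
      intro!: sum.cong)

lemma rayleigh_lambda_max:
  fixes A :: "real mat"
  assumes A: "A \<in> carrier_mat k k" and k: "k > 0" and sym: "transpose_mat A = A"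
  shows "\<forall>y\<in>carrier_vec k. y \<bullet> (A *\<^sub>v y) \<le> lambda_max A * (y \<bullet> y)"
proof -
  define a where "a i j = (if i < k \<and> j < k then A $$ (i,j) else 0)" for i j
  have asym: "a i j = a j i" for i j
  proof -
    have "i < k \<Longrightarrow> j < k \<Longrightarrow> A $$ (i,j) = A $$ (j,i)"
      using A by (metis carrier_matD index_transpose_mat(1) sym)
    thus ?thesis unfolding a_def by auto
  qed
  obtain f \<mu> where f1: "(\<Sum>i<k. (f i)^2) = 1"
    and eig: "\<forall>i<k. (\<Sum>j<k. a i j * f j) = \<mu> * f i"
    and bnd: "\<forall>g. (\<Sum>i<k. \<Sum>j<k. g i * a i j * g j) \<le> \<mu> * (\<Sum>i<k. (g i)^2)"
    using rayleigh_fun[of a k, OF asym k] by blast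
  define x where "x = vec k f"
  have xc: "x \<in> carrier_vec k" unfolding x_def by simp
  have xne: "x \<noteq> 0\<^sub>v k"
  proof
    assume "x = 0\<^sub>v k"
    hence "\<forall>i<k. f i = 0" unfolding x_def by (metis index_vec index_zero_vec(1))
    hence "(\<Sum>i<k. (f i)^2) = 0" by simp
    with f1 show False by simp
  qed
  have "A *\<^sub>v x = \<mu> \<cdot>\<^sub>v x"
  proof (rule eq_vecI)
    fix i assume "i < dim_vec (\<mu> \<cdot>\<^sub>v x)"
    hence i: "i < k" using xc by simp
    have "(A *\<^sub>v x) $ i = (\<Sum>j<k. A $$ (i,j) * f j)"
      using A i by (simp add: mult_mat_vec_def scalar_prod_def row_def x_def atLeast0LessThan)
    also have "\<dots> = (\<Sum>j<k. a i j * f j)" unfolding a_def using i by simp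
    also have "\<dots> = \<mu> * f i" using eig i by simp
    finally show "(A *\<^sub>v x) $ i = (\<mu> \<cdot>\<^sub>v x) $ i" using i by (simp add: x_def)
  qed (use A xc in simp)
  hence "eigenvalue A \<mu>" unfolding eigenvalue_def eigenvector_def
    using A xc xne by (intro exI[of _ x]) auto
  hence mu_le: "\<mu> \<le> lambda_max A" unfolding lambda_max_def
    using finite_eigenvalues[OF A] by (intro Max_ge) auto
  show ?thesis
  proof
    fix y :: "real vec" assume y: "y \<in> carrier_vec k"
    have "y \<bullet> (A *\<^sub>v y) = (\<Sum>i<k. \<Sum>j<k. y $ i * a i j * y $ j)"
      unfolding quad_form_sum[OF A y] a_def by (intro sum.cong) auto
    also have "\<dots> \<le> \<mu> * (\<Sum>i<k. (y $ i)^2)" using bnd by blast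
    also have "(\<Sum>i<k. (y $ i)^2) = y \<bullet> y"
      using y by (simp add: scalar_prod_def atLeast0LessThan power2_eq_square)
    also have "\<mu> * (y \<bullet> y) \<le> lambda_max A * (y \<bullet> y)"
      using mu_le by (intro mult_right_mono) (simp_all add: scalar_prod_def sum_nonneg)
    finally show "y \<bullet> (A *\<^sub>v y) \<le> lambda_max A * (y \<bullet> y)" .
  qed
qed

lemma sum_idx_split:
  fixes f :: "nat \<Rightarrow> real"
  shows "(\<Sum>t<a*d. f t) = (\<Sum>j<a. \<Sum>k<d. f (j*d+k))"
proof -
  have "(\<Sum>t<a*d. f t) = (\<Sum>j<a. sum f {j*d..<j*d+d})"
    by (rule sum.nat_group[symmetric])
  also have "\<dots> = (\<Sum>j<a. \<Sum>k<d. f (j*d+k))"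
  proof (rule sum.cong[OF refl])
    fix j
    have "sum f {j*d..<j*d+d} = sum f {0 + j*d..<d + j*d}" by (simp add: add.commute)
    also have "\<dots> = (\<Sum>k=0..<d. f (k + j*d))" by (rule sum.shift_bounds_nat_ivl)
    also have "\<dots> = (\<Sum>k<d. f (j*d+k))" by (simp add: atLeast0LessThan add.commute)
    finally show "sum f {j*d..<j*d+d} = (\<Sum>k<d. f (j*d+k))" .
  qed
  finally show ?thesis .
qed

lemma UT_bound:
  fixes U :: "real mat"
  assumes U: "U \<in> carrier_mat r m" and lam: "lam > 0"
    and hb: "\<forall>y\<in>carrier_vec m. (U *\<^sub>v y) \<bullet> (U *\<^sub>v y) \<le> lam * (y \<bullet> y)"
    and w: "w \<in> carrier_vec r"
  shows "(transpose_mat U *\<^sub>v w) \<bullet> (transpose_mat U *\<^sub>v w) \<le> lam * (w \<bullet> w)"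
proof -
  define z where "z = transpose_mat U *\<^sub>v w"
  define u where "u = U *\<^sub>v z"
  have zc: "z \<in> carrier_vec m" unfolding z_def using U w by auto
  have uc: "u \<in> carrier_vec r" unfolding u_def by (rule mult_mat_vec_carrier[OF U zc])
  have s: "z \<bullet> z = w \<bullet> u"
    unfolding u_def using transpose_vec_mult_scalar[OF U zc w] unfolding z_def by simp
  have uu: "u \<bullet> u \<le> lam * (z \<bullet> z)" unfolding u_def using hb zc by blast
  have "0 \<le> (\<Sum>i<r. (lam * w$i - u$i)^2)" by (simp add: sum_nonneg)
  also have "\<dots> = lam^2 * (\<Sum>i<r. w$i * w$i) - 2 * lam * (\<Sum>i<r. w$i * u$i) + (\<Sum>i<r. u$i * u$i)"
    by (simp add: power2_eq_square algebra_simps sum.distrib sum_subtractf sum_distrib_left)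
  also have "\<dots> = lam^2 * (w \<bullet> w) - 2 * lam * (w \<bullet> u) + (u \<bullet> u)"
    using w uc by (simp add: scalar_prod_def atLeast0LessThan)
  finally have "0 \<le> lam^2 * (w \<bullet> w) - 2 * lam * (z \<bullet> z) + (u \<bullet> u)"
    unfolding s .
  hence "0 \<le> lam^2 * (w \<bullet> w) - 2 * lam * (z \<bullet> z) + lam * (z \<bullet> z)"
    using uu by linarith
  hence "0 \<le> lam * (lam * (w \<bullet> w) - z \<bullet> z)" by (simp add: algebra_simps power2_eq_square)
  hence "z \<bullet> z \<le> lam * (w \<bullet> w)" using lam by (simp add: zero_le_mult_iff)
  thus ?thesis unfolding z_def .
qed

lemma kron_T_entry:
  fixes U :: "real mat"
  assumes U: "U \<in> carrier_mat r m" and v: "v \<in> carrier_vec (r*d)" and i: "i < m" and k: "k < d"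
  shows "(transpose_mat (kron U (1\<^sub>m d)) *\<^sub>v v) $ (i*d+k) = (transpose_mat U *\<^sub>v vec r (\<lambda>j. v $ (j*d+k))) $ i"
proof -
  have "i*d + k < (i+1)*d" using k by simp
  also have "(i+1)*d \<le> m*d" using i by (intro mult_right_mono) auto
  finally have idx: "i*d+k < m*d" .
  have lt: "j*d+k' < a*d" if "j < a" "k' < d" for j k' a :: nat
  proof -
    have "j*d + k' < (j+1)*d" using that by simp
    also have "(j+1)*d \<le> a*d" using that by (intro mult_right_mono) auto
    finally show ?thesis .
  qed
  define K where "K = kron U (1\<^sub>m d)"
  have Kd: "dim_row K = r*d" "dim_col K = m*d" using U unfolding K_def kron_def by auto
  have Kidx: "K $$ (j*d+k', i*d+k) = (if k' = k then U $$ (j,i) else 0)" if "j < r" "k' < d" for j k'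
  proof -
    have d0: "d > 0" using k by simp
    have "K $$ (j*d+k', i*d+k) = U $$ (j, i) * 1\<^sub>m d $$ (k', k)"
      unfolding K_def kron_def using U lt[OF that] idx d0 that k by auto
    thus ?thesis using that k by simp
  qed
  have "(transpose_mat K *\<^sub>v v) $ (i*d+k) = (\<Sum>t<r*d. K $$ (t, i*d+k) * v $ t)"
    using v idx Kd by (simp add: mult_mat_vec_def scalar_prod_def atLeast0LessThan col_def)
  also have "\<dots> = (\<Sum>j<r. \<Sum>k'<d. K $$ (j*d+k', i*d+k) * v $ (j*d+k'))"
    by (rule sum_idx_split)
  also have "\<dots> = (\<Sum>j<r. U $$ (j,i) * v $ (j*d+k))"
  proof (rule sum.cong[OF refl])
    fix j assume "j \<in> {..<r}"
    hence j: "j < r" by simp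
    have "(\<Sum>k'<d. K $$ (j*d+k', i*d+k) * v $ (j*d+k')) = (\<Sum>k'<d. if k' = k then U $$ (j,i) * v $ (j*d+k) else 0)"
      by (rule sum.cong[OF refl]) (simp add: Kidx[OF j])
    also have "\<dots> = U $$ (j,i) * v $ (j*d+k)" using k by simp
    finally show "(\<Sum>k'<d. K $$ (j*d+k', i*d+k) * v $ (j*d+k')) = U $$ (j,i) * v $ (j*d+k)" .
  qed
  also have "\<dots> = (transpose_mat U *\<^sub>v vec r (\<lambda>j. v $ (j*d+k))) $ i"
    using U i by (simp add: mult_mat_vec_def scalar_prod_def atLeast0LessThan col_def)
  finally show ?thesis unfolding K_def .
qed

lemma kron_bound:
  fixes U :: "real mat"
  assumes U: "U \<in> carrier_mat r m"
    and hb: "\<forall>w\<in>carrier_vec r. (transpose_mat U *\<^sub>v w) \<bullet> (transpose_mat U *\<^sub>v w) \<le> lam * (w \<bullet> w)"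
    and v: "v \<in> carrier_vec (r*d)"
  shows "(transpose_mat (kron U (1\<^sub>m d)) *\<^sub>v v) \<bullet> (transpose_mat (kron U (1\<^sub>m d)) *\<^sub>v v) \<le> lam * (v \<bullet> v)"
proof -
  define z where "z = transpose_mat (kron U (1\<^sub>m d)) *\<^sub>v v"
  define w where "w k = vec r (\<lambda>j. v $ (j*d+k))" for k
  have wc: "w k \<in> carrier_vec r" for k unfolding w_def by simp
  have dz: "dim_vec z = m*d" unfolding z_def kron_def using U by simp
  have "z \<bullet> z = (\<Sum>t<m*d. z $ t * z $ t)" using dz by (simp add: scalar_prod_def atLeast0LessThan)
  also have "\<dots> = (\<Sum>i<m. \<Sum>k<d. z $ (i*d+k) * z $ (i*d+k))" by (rule sum_idx_split)
  also have "\<dots> = (\<Sum>i<m. \<Sum>k<d. (transpose_mat U *\<^sub>v w k) $ i * (transpose_mat U *\<^sub>v w k) $ i)"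
    unfolding z_def w_def using kron_T_entry[OF U v] by simp
  also have "\<dots> = (\<Sum>k<d. (transpose_mat U *\<^sub>v w k) \<bullet> (transpose_mat U *\<^sub>v w k))"
    using U by (subst sum.swap) (simp add: scalar_prod_def atLeast0LessThan)
  also have "\<dots> \<le> (\<Sum>k<d. lam * (w k \<bullet> w k))"
    by (rule sum_mono) (use hb wc in blast)
  also have "\<dots> = lam * (\<Sum>k<d. \<Sum>j<r. v $ (j*d+k) * v $ (j*d+k))"
    by (simp add: sum_distrib_left w_def scalar_prod_def atLeast0LessThan)
  also have "(\<Sum>k<d. \<Sum>j<r. v $ (j*d+k) * v $ (j*d+k)) = v \<bullet> v"
  proof -
    have "(\<Sum>k<d. \<Sum>j<r. v $ (j*d+k) * v $ (j*d+k)) = (\<Sum>j<r. \<Sum>k<d. v $ (j*d+k) * v $ (j*d+k))"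
      by (rule sum.swap)
    also have "\<dots> = (\<Sum>t<r*d. v $ t * v $ t)" by (rule sum_idx_split[symmetric])
    also have "\<dots> = v \<bullet> v" using v by (simp add: scalar_prod_def atLeast0LessThan)
    finally show ?thesis .
  qed
  finally show ?thesis unfolding z_def .
qed

definition dg :: "(nat \<Rightarrow> real) \<Rightarrow> nat \<Rightarrow> real mat" where
  "dg f N = mat N N (\<lambda>(i,j). if i = j then f i else 0)"

fun bf :: "('b \<Rightarrow> real) \<Rightarrow> ('b \<Rightarrow> nat) \<Rightarrow> 'b list \<Rightarrow> nat \<Rightarrow> real" where
  "bf c k [] j = 0"
| "bf c k (x # xs) j = (if j < k x then c x else bf c k xs (j - k x))"

lemma dg_carrier[simp]: "dg f N \<in> carrier_mat N N" unfolding dg_def by simp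
lemma dg_dims[simp]: "dim_row (dg f N) = N" "dim_col (dg f N) = N" unfolding dg_def by simp_all
lemma dg_index[simp]: "i < N \<Longrightarrow> j < N \<Longrightarrow> dg f N $$ (i,j) = (if i = j then f i else 0)"
  unfolding dg_def by simp

lemma diag_block_dg:
  "diag_block_mat (map (\<lambda>x. c x \<cdot>\<^sub>m 1\<^sub>m (k x)) xs) = dg (bf c k xs) (sum_list (map k xs))"
proof (induction xs)
  case Nil
  show ?case by (rule eq_matI) auto
next
  case (Cons x xs)
  show ?case
    unfolding list.map diag_block_mat.simps Let_def Cons.IH
    by (rule eq_matI) auto
qed

lemma bf_in: "j < sum_list (map k xs) \<Longrightarrow> \<exists>x\<in>set xs. bf c k xs j = c x"
proof (induction xs arbitrary: j)
  case Nil
  then show ?case by simp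
next
  case (Cons x xs)
  show ?case
  proof (cases "j < k x")
    case True then show ?thesis by simp
  next
    case False
    hence "j - k x < sum_list (map k xs)" using Cons.prems by simp
    from Cons.IH[OF this] False show ?thesis by auto
  qed
qed

lemma dg_mult: "dg f N * dg g N = dg (\<lambda>i. f i * g i) N"
proof (rule eq_matI)
  fix i j assume ij: "i < dim_row (dg (\<lambda>i. f i * g i) N)" "j < dim_col (dg (\<lambda>i. f i * g i) N)"
  hence i: "i < N" and j: "j < N" by auto
  have "(dg f N * dg g N) $$ (i,j) = (\<Sum>l\<in>{0..<N}. dg f N $$ (i,l) * dg g N $$ (l,j))"
    using i j by (simp add: scalar_prod_def)
  also have "\<dots> = (\<Sum>l\<in>{0..<N}. if l = i then (if i = j then f i * g i else 0) else 0)"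
    using i j by (intro sum.cong) auto
  also have "\<dots> = (if i = j then f i * g i else 0)" using i by simp
  finally show "(dg f N * dg g N) $$ (i,j) = dg (\<lambda>i. f i * g i) N $$ (i,j)" using i j by simp
qed auto

lemma dg_transpose[simp]: "transpose_mat (dg f N) = dg f N"
  by (rule eq_matI) auto

lemma dg_add: "dg f N + dg g N = dg (\<lambda>i. f i + g i) N"
  by (rule eq_matI) auto
lemma dg_minus: "dg f N - dg g N = dg (\<lambda>i. f i - g i) N"
  by (rule eq_matI) auto
lemma dg_one: "1\<^sub>m N = dg (\<lambda>_. 1) N"
  by (rule eq_matI) auto
lemma dg_smult_one: "c \<cdot>\<^sub>m 1\<^sub>m N = dg (\<lambda>_. c) N"
  by (rule eq_matI) auto
lemma dg_zero: "0\<^sub>m N N = dg (\<lambda>_. 0) N"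
  by (rule eq_matI) auto

lemma dg_quad: assumes x: "x \<in> carrier_vec N"
  shows "x \<bullet> (dg f N *\<^sub>v x) = (\<Sum>i<N. f i * (x $ i)^2)"
proof -
  have "(dg f N *\<^sub>v x) $ i = f i * x $ i" if i: "i < N" for i
  proof -
    have "(dg f N *\<^sub>v x) $ i = (\<Sum>l\<in>{0..<N}. dg f N $$ (i,l) * x $ l)"
      using i x by (simp add: mult_mat_vec_def scalar_prod_def)
    also have "\<dots> = (\<Sum>l\<in>{0..<N}. if l = i then f i * x $ i else 0)"
      using i by (intro sum.cong) auto
    finally show ?thesis using i by simp
  qed
  thus ?thesis using x
    by (simp add: scalar_prod_def atLeast0LessThan power2_eq_square algebra_simps)
qed

lemma pd_dg: assumes "\<forall>i<N. f i > 0" shows "pd (dg f N)"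
  unfolding pd_def
proof (intro conjI ballI impI)
  show "square_mat (dg f N)" by simp
  show "transpose_mat (dg f N) = dg f N" by simp
  fix v :: "real vec" assume v: "v \<in> carrier_vec (dim_row (dg f N))" and ne: "v \<noteq> 0\<^sub>v (dim_row (dg f N))"
  hence vc: "v \<in> carrier_vec N" by simp
  from ne vc obtain i where i: "i < N" "v $ i \<noteq> 0"
    by (metis carrier_vecD dg_dims(1) eq_vecI index_zero_vec(1) index_zero_vec(2))
  have "0 < f i * (v $ i)^2" using assms i by simp
  also have "\<dots> \<le> (\<Sum>j<N. f j * (v $ j)^2)"
    by (rule member_le_sum) (use assms i in \<open>auto intro: mult_nonneg_nonneg less_imp_le\<close>)
  finally show "0 < v \<bullet> (dg f N *\<^sub>v v)" using dg_quad[OF vc] by simp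
qed

lemma psd_dg: assumes "\<forall>i<N. f i \<ge> 0" shows "psd (dg f N)"
  unfolding psd_def
proof (intro conjI ballI)
  show "square_mat (dg f N)" by simp
  show "transpose_mat (dg f N) = dg f N" by simp
  fix v :: "real vec" assume v: "v \<in> carrier_vec (dim_row (dg f N))"
  hence vc: "v \<in> carrier_vec N" by simp
  show "0 \<le> v \<bullet> (dg f N *\<^sub>v v)" unfolding dg_quad[OF vc]
    by (rule sum_nonneg) (use assms in auto)
qed

lemma quad_split:
  fixes A B :: "real mat"
  assumes A: "A \<in> carrier_mat a a" and B: "B \<in> carrier_mat b b" and v: "v \<in> carrier_vec (a+b)"
  shows "v \<bullet> (four_block_mat A (0\<^sub>m a b) (0\<^sub>m b a) B *\<^sub>v v)
     = vec_first v a \<bullet> (A *\<^sub>v vec_first v a) + vec_last v b \<bullet> (B *\<^sub>v vec_last v b)"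
proof -
  have "v = vec_first v a @\<^sub>v vec_last v b" using v by simp
  hence "v \<bullet> (four_block_mat A (0\<^sub>m a b) (0\<^sub>m b a) B *\<^sub>v v)
     = (vec_first v a @\<^sub>v vec_last v b) \<bullet> (A *\<^sub>v vec_first v a @\<^sub>v B *\<^sub>v vec_last v b)"
    using mult_mat_vec_split[OF A B vec_first_carrier vec_last_carrier] by metis
  also have "\<dots> = vec_first v a \<bullet> (A *\<^sub>v vec_first v a) + vec_last v b \<bullet> (B *\<^sub>v vec_last v b)"
    by (rule scalar_prod_append[of _ a _ b]) (use A B in auto)
  finally show ?thesis .
qed

lemma transpose_fbd:
  assumes A: "A \<in> carrier_mat a a" and B: "B \<in> carrier_mat b b"
  shows "transpose_mat (four_block_mat A (0\<^sub>m a b) (0\<^sub>m b a) B)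
     = four_block_mat (transpose_mat A) (0\<^sub>m a b) (0\<^sub>m b a) (transpose_mat B)"
  using A B by (subst transpose_four_block_mat) auto

lemma psd_fbd:
  assumes A: "A \<in> carrier_mat a a" and B: "B \<in> carrier_mat b b" and pA: "psd A" and pB: "psd B"
  shows "psd (four_block_mat A (0\<^sub>m a b) (0\<^sub>m b a) B)"
  unfolding psd_def
proof (intro conjI ballI)
  show "square_mat (four_block_mat A (0\<^sub>m a b) (0\<^sub>m b a) B)" using A B by simp
  show "transpose_mat (four_block_mat A (0\<^sub>m a b) (0\<^sub>m b a) B) = four_block_mat A (0\<^sub>m a b) (0\<^sub>m b a) B"
    using transpose_fbd[OF A B] pA pB unfolding psd_def by simp
  fix v :: "real vec" assume "v \<in> carrier_vec (dim_row (four_block_mat A (0\<^sub>m a b) (0\<^sub>m b a) B))"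
  hence v: "v \<in> carrier_vec (a+b)" using A B by simp
  show "0 \<le> v \<bullet> (four_block_mat A (0\<^sub>m a b) (0\<^sub>m b a) B *\<^sub>v v)"
    unfolding quad_split[OF A B v] using pA pB A B unfolding psd_def
    by (metis add_nonneg_nonneg carrier_matD(1) vec_first_carrier vec_last_carrier)
qed

lemma pd_fbd:
  assumes A: "A \<in> carrier_mat a a" and B: "B \<in> carrier_mat b b" and pA: "pd A" and pB: "pd B"
  shows "pd (four_block_mat A (0\<^sub>m a b) (0\<^sub>m b a) B)"
  unfolding pd_def
proof (intro conjI ballI impI)
  show "square_mat (four_block_mat A (0\<^sub>m a b) (0\<^sub>m b a) B)" using A B by simp
  show "transpose_mat (four_block_mat A (0\<^sub>m a b) (0\<^sub>m b a) B) = four_block_mat A (0\<^sub>m a b) (0\<^sub>m b a) B"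
    using transpose_fbd[OF A B] pA pB unfolding pd_def by simp
  fix v :: "real vec" assume "v \<in> carrier_vec (dim_row (four_block_mat A (0\<^sub>m a b) (0\<^sub>m b a) B))"
    and ne: "v \<noteq> 0\<^sub>v (dim_row (four_block_mat A (0\<^sub>m a b) (0\<^sub>m b a) B))"
  hence v: "v \<in> carrier_vec (a+b)" and ne': "v \<noteq> 0\<^sub>v (a+b)" using A B by auto
  have z: "0\<^sub>v (a+b) = 0\<^sub>v a @\<^sub>v (0\<^sub>v b :: real vec)" by (rule eq_vecI) auto
  have "vec_first v a \<noteq> 0\<^sub>v a \<or> vec_last v b \<noteq> 0\<^sub>v b"
    using ne' vec_first_last_append[OF v] z by metis
  moreover have "\<forall>x\<in>carrier_vec a. 0 \<le> x \<bullet> (A *\<^sub>v x)"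
    using pA A unfolding pd_def by (metis carrier_matD(1) order_refl less_imp_le scalar_prod_left_zero mult_mat_vec_carrier)
  moreover have "\<forall>x\<in>carrier_vec b. 0 \<le> x \<bullet> (B *\<^sub>v x)"
    using pB B unfolding pd_def by (metis carrier_matD(1) order_refl less_imp_le scalar_prod_left_zero mult_mat_vec_carrier)
  ultimately show "0 < v \<bullet> (four_block_mat A (0\<^sub>m a b) (0\<^sub>m b a) B *\<^sub>v v)"
    unfolding quad_split[OF A B v] using pA pB A B unfolding pd_def
    by (metis add_pos_nonneg add_nonneg_pos carrier_matD(1) vec_first_carrier vec_last_carrier)
qed

lemma fbd_mult:
  fixes A B C D :: "real mat"
  assumes "A \<in> carrier_mat a a" "C \<in> carrier_mat a a" "B \<in> carrier_mat e e" "D \<in> carrier_mat e e"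
  shows "four_block_mat A (0\<^sub>m a e) (0\<^sub>m e a) B * four_block_mat C (0\<^sub>m a e) (0\<^sub>m e a) D
       = four_block_mat (A * C) (0\<^sub>m a e) (0\<^sub>m e a) (B * D)"
  using assms by (subst mult_four_block_mat[OF assms(1) zero_carrier_mat zero_carrier_mat assms(3)
        assms(2) zero_carrier_mat zero_carrier_mat assms(4)]) auto

lemma fbd_add:
  fixes A B C D :: "real mat"
  assumes "A \<in> carrier_mat a a" "C \<in> carrier_mat a a" "B \<in> carrier_mat e e" "D \<in> carrier_mat e e"
  shows "four_block_mat A (0\<^sub>m a e) (0\<^sub>m e a) B + four_block_mat C (0\<^sub>m a e) (0\<^sub>m e a) D
       = four_block_mat (A + C) (0\<^sub>m a e) (0\<^sub>m e a) (B + D)"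
  using assms by (intro eq_matI) auto

lemma fbd_minus:
  fixes A B C D :: "real mat"
  assumes "A \<in> carrier_mat a a" "C \<in> carrier_mat a a" "B \<in> carrier_mat e e" "D \<in> carrier_mat e e"
  shows "four_block_mat A (0\<^sub>m a e) (0\<^sub>m e a) B - four_block_mat C (0\<^sub>m a e) (0\<^sub>m e a) D
       = four_block_mat (A - C) (0\<^sub>m a e) (0\<^sub>m e a) (B - D)"
  using assms by (intro eq_matI) auto

lemma fb_minus:
  fixes A B C D A' B' C' D' :: "real mat"
  assumes "A \<in> carrier_mat a1 b1" "B \<in> carrier_mat a1 b2" "C \<in> carrier_mat a2 b1" "D \<in> carrier_mat a2 b2"
   "A' \<in> carrier_mat a1 b1" "B' \<in> carrier_mat a1 b2" "C' \<in> carrier_mat a2 b1" "D' \<in> carrier_mat a2 b2"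
  shows "four_block_mat A B C D - four_block_mat A' B' C' D' = four_block_mat (A - A') (B - B') (C - C') (D - D')"
  using assms by (intro eq_matI) auto

lemma fb_add:
  fixes A B C D A' B' C' D' :: "real mat"
  assumes "A \<in> carrier_mat a1 b1" "B \<in> carrier_mat a1 b2" "C \<in> carrier_mat a2 b1" "D \<in> carrier_mat a2 b2"
   "A' \<in> carrier_mat a1 b1" "B' \<in> carrier_mat a1 b2" "C' \<in> carrier_mat a2 b1" "D' \<in> carrier_mat a2 b2"
  shows "four_block_mat A B C D + four_block_mat A' B' C' D' = four_block_mat (A + A') (B + B') (C + C') (D + D')"
  using assms by (intro eq_matI) auto

lemma block3_diag:
  fixes A B C D E :: "real mat"
  assumes "A \<in> carrier_mat a a" "B \<in> carrier_mat b b" "C \<in> carrier_mat b c" "D \<in> carrier_mat c b" "E \<in> carrier_mat c c"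
  shows "block3 A (0\<^sub>m a b) (0\<^sub>m a c) (0\<^sub>m b a) B C (0\<^sub>m c a) D E
     = four_block_mat A (0\<^sub>m a (b+c)) (0\<^sub>m (b+c) a) (four_block_mat B C D E)"
  unfolding block3_def using assms
  using four_block_zero_mat[of a b 0 c] four_block_zero_mat[of b 0 c 0] by simp

lemma add_uminus_self_mat[simp]: "(A :: real mat) + - A = 0\<^sub>m (dim_row A) (dim_col A)"
  by (rule eq_matI) auto

lemma aam_mat: "(A :: real mat) \<in> carrier_mat r c \<Longrightarrow> A + A - A = A"
  by (rule eq_matI) auto
lemma bbx_mat: "(B :: real mat) \<in> carrier_mat r c \<Longrightarrow> X \<in> carrier_mat r c \<Longrightarrow> B + B - (X + B) = B - X"
  by (rule eq_matI) auto

lemma bf_inv: "bf (\<lambda>x. 1 / c x) k xs = (\<lambda>j. 1 / bf c k xs j)"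
proof
  fix j show "bf (\<lambda>x. 1 / c x) k xs j = 1 / bf c k xs j"
    by (induction xs arbitrary: j) auto
qed

lemma dg_cong: "(\<And>i. i < N \<Longrightarrow> f i = g i) \<Longrightarrow> dg f N = dg g N"
  by (rule eq_matI) auto

lemma psd_congr:
  fixes W :: "real mat"
  assumes W: "W \<in> carrier_mat c b" and ga: "\<forall>j<b. ga j \<ge> 0"
  shows "psd (W * dg ga b * transpose_mat W)"
  unfolding psd_def
proof (intro conjI ballI)
  have cG: "dg ga b \<in> carrier_mat b b" by simp
  have cWt: "transpose_mat W \<in> carrier_mat b c" using W by simp
  show "square_mat (W * dg ga b * transpose_mat W)" using W by simp
  have "transpose_mat (W * dg ga b * transpose_mat W) = transpose_mat (transpose_mat W) * transpose_mat (W * dg ga b)"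
    by (rule transpose_mult[of _ c b]) (use W in auto)
  also have "\<dots> = W * (dg ga b * transpose_mat W)"
    using W by (subst transpose_mult[of _ c b]) auto
  also have "\<dots> = W * dg ga b * transpose_mat W"
    using W by (simp add: assoc_mult_mat[OF W cG cWt])
  finally show "transpose_mat (W * dg ga b * transpose_mat W) = W * dg ga b * transpose_mat W" .
  fix v :: "real vec" assume "v \<in> carrier_vec (dim_row (W * dg ga b * transpose_mat W))"
  hence v: "v \<in> carrier_vec c" using W by simp
  define z where "z = transpose_mat W *\<^sub>v v"
  have zc: "z \<in> carrier_vec b" unfolding z_def using W v by simp
  have WG: "W * dg ga b \<in> carrier_mat c b" using W by simp
  have "(W * dg ga b * transpose_mat W) *\<^sub>v v = (W * dg ga b) *\<^sub>v z"
    unfolding z_def by (rule assoc_mult_mat_vec[OF WG cWt v])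
  also have "\<dots> = W *\<^sub>v (dg ga b *\<^sub>v z)" by (rule assoc_mult_mat_vec[OF W cG zc])
  finally have "(W * dg ga b * transpose_mat W) *\<^sub>v v = W *\<^sub>v (dg ga b *\<^sub>v z)" .
  hence "v \<bullet> ((W * dg ga b * transpose_mat W) *\<^sub>v v) = v \<bullet> (W *\<^sub>v (dg ga b *\<^sub>v z))" by simp
  also have "\<dots> = z \<bullet> (dg ga b *\<^sub>v z)"
    using transpose_vec_mult_scalar[OF W mult_mat_vec_carrier[OF cG zc] v] unfolding z_def by simp
  also have "\<dots> = (\<Sum>i<b. ga i * (z $ i)^2)" by (rule dg_quad[OF zc])
  also have "\<dots> \<ge> 0" by (rule sum_nonneg) (use ga in auto)
  finally show "0 \<le> v \<bullet> (W * dg ga b * transpose_mat W *\<^sub>v v)" .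
qed

lemma core:
  fixes th al ga :: "nat \<Rightarrow> real" and W :: "real mat" and \<beta> :: real and a b c :: nat
  assumes W: "W \<in> carrier_mat c b" and \<beta>: "\<beta> > 0"
    and th: "\<forall>j<a. 0 < th j \<and> th j < 2" and al: "\<forall>j<a. al j > 0" and ga: "\<forall>j<b. ga j > 0"
    and D3: "pd ((1/\<beta>) \<cdot>\<^sub>m 1\<^sub>m c - W * dg ga b * transpose_mat W)"
  shows "let Q = block3 (dg (\<lambda>j. 1/al j) a) (0\<^sub>m a b) (0\<^sub>m a c) (0\<^sub>m b a) (dg (\<lambda>j. 1/ga j) b)
                  (- transpose_mat W) (0\<^sub>m c a) (0\<^sub>m c b) ((1/\<beta>) \<cdot>\<^sub>m 1\<^sub>m c);
             M = block3 (dg th a) (0\<^sub>m a b) (0\<^sub>m a c) (0\<^sub>m b a) (1\<^sub>m b) (- (dg ga b * transpose_mat W))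
                  (0\<^sub>m c a) (0\<^sub>m c b) (1\<^sub>m c);
             H = Q * mat_inv M; D = transpose_mat Q + Q - transpose_mat M * H * M
         in invertible_mat M \<and> loewner_ge H D \<and> pd D"
proof -
  define e where "e = b + c"
  define Y where "Y = dg (\<lambda>j. 1/al j) a"
  define T where "T = dg th a"
  define Ti where "Ti = dg (\<lambda>j. 1/th j) a"
  define G where "G = dg ga b"
  define Gi where "Gi = dg (\<lambda>j. 1/ga j) b"
  define Wt where "Wt = transpose_mat W"
  define bI where "bI = (1/\<beta>) \<cdot>\<^sub>m 1\<^sub>m c"
  define X where "X = W * G * Wt"
  define Q2 where "Q2 = four_block_mat Gi (- Wt) (0\<^sub>m c b) bI"
  define M2 where "M2 = four_block_mat (1\<^sub>m b) (- (G * Wt)) (0\<^sub>m c b) (1\<^sub>m c)"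
  define Mi2 where "Mi2 = four_block_mat (1\<^sub>m b) (G * Wt) (0\<^sub>m c b) (1\<^sub>m c)"
  define Q where "Q = four_block_mat Y (0\<^sub>m a e) (0\<^sub>m e a) Q2"
  define M where "M = four_block_mat T (0\<^sub>m a e) (0\<^sub>m e a) M2"
  define Minv where "Minv = four_block_mat Ti (0\<^sub>m a e) (0\<^sub>m e a) Mi2"
  have cY: "Y \<in> carrier_mat a a" and cT: "T \<in> carrier_mat a a" and cTi: "Ti \<in> carrier_mat a a"
    and cG: "G \<in> carrier_mat b b" and cGi: "Gi \<in> carrier_mat b b" and cWt: "Wt \<in> carrier_mat b c"
    and cbI: "bI \<in> carrier_mat c c" and cGWt: "G * Wt \<in> carrier_mat b c" and cX: "X \<in> carrier_mat c c"
    unfolding Y_def T_def Ti_def G_def Gi_def Wt_def bI_def X_def using W by auto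
  have cQ2: "Q2 \<in> carrier_mat e e" unfolding Q2_def e_def using cGi cbI by auto
  have cM2: "M2 \<in> carrier_mat e e" unfolding M2_def e_def by auto
  have cMi2: "Mi2 \<in> carrier_mat e e" unfolding Mi2_def e_def by auto
  have cQ: "Q \<in> carrier_mat (a+e) (a+e)" unfolding Q_def using cY cQ2 by auto
  have cM: "M \<in> carrier_mat (a+e) (a+e)" unfolding M_def using cT cM2 by auto
  have cMinv: "Minv \<in> carrier_mat (a+e) (a+e)" unfolding Minv_def using cTi cMi2 by auto
  have Qe: "block3 (dg (\<lambda>j. 1/al j) a) (0\<^sub>m a b) (0\<^sub>m a c) (0\<^sub>m b a) (dg (\<lambda>j. 1/ga j) b)
                  (- transpose_mat W) (0\<^sub>m c a) (0\<^sub>m c b) ((1/\<beta>) \<cdot>\<^sub>m 1\<^sub>m c) = Q"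
    unfolding Q_def Q2_def e_def Y_def Gi_def Wt_def bI_def
    by (rule block3_diag) (use W in auto)
  have Me: "block3 (dg th a) (0\<^sub>m a b) (0\<^sub>m a c) (0\<^sub>m b a) (1\<^sub>m b) (- (dg ga b * transpose_mat W))
                  (0\<^sub>m c a) (0\<^sub>m c b) (1\<^sub>m c) = M"
    unfolding M_def M2_def e_def T_def G_def Wt_def
    by (rule block3_diag) (use W in auto)
  have TTi: "T * Ti = 1\<^sub>m a" "Ti * T = 1\<^sub>m a"
    unfolding T_def Ti_def dg_mult dg_one using th by (auto intro!: dg_cong)
  have GGi: "Gi * G = 1\<^sub>m b" "G * Gi = 1\<^sub>m b"
    unfolding G_def Gi_def dg_mult dg_one using ga by (auto intro!: dg_cong)
  have M2Mi2: "M2 * Mi2 = 1\<^sub>m e"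
  proof -
    have "M2 * Mi2 = four_block_mat (1\<^sub>m b * 1\<^sub>m b + - (G * Wt) * 0\<^sub>m c b) (1\<^sub>m b * (G * Wt) + - (G * Wt) * 1\<^sub>m c)
       (0\<^sub>m c b * 1\<^sub>m b + 1\<^sub>m c * 0\<^sub>m c b) (0\<^sub>m c b * (G * Wt) + 1\<^sub>m c * 1\<^sub>m c)"
      unfolding M2_def Mi2_def
      by (rule mult_four_block_mat) (use cGWt in auto)
    also have "\<dots> = four_block_mat (1\<^sub>m b) (0\<^sub>m b c) (0\<^sub>m c b) (1\<^sub>m c)"
      using cGWt by (intro cong_four_block_mat) (auto intro!: eq_matI simp: carrier_matD[OF cGWt] carrier_matD[OF cG] carrier_matD[OF cWt])
    finally show ?thesis unfolding e_def by simp
  qed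
  have Mi2M2: "Mi2 * M2 = 1\<^sub>m e"
  proof -
    have "Mi2 * M2 = four_block_mat (1\<^sub>m b * 1\<^sub>m b + (G * Wt) * 0\<^sub>m c b) (1\<^sub>m b * (- (G * Wt)) + (G * Wt) * 1\<^sub>m c)
       (0\<^sub>m c b * 1\<^sub>m b + 1\<^sub>m c * 0\<^sub>m c b) (0\<^sub>m c b * (- (G * Wt)) + 1\<^sub>m c * 1\<^sub>m c)"
      unfolding M2_def Mi2_def
      by (rule mult_four_block_mat) (use cGWt in auto)
    also have "\<dots> = four_block_mat (1\<^sub>m b) (0\<^sub>m b c) (0\<^sub>m c b) (1\<^sub>m c)"
      using cGWt by (intro cong_four_block_mat) (auto intro!: eq_matI simp: carrier_matD[OF cGWt] carrier_matD[OF cG] carrier_matD[OF cWt])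
    finally show ?thesis unfolding e_def by simp
  qed
  have MMi: "M * Minv = 1\<^sub>m (a+e)"
    unfolding M_def Minv_def fbd_mult[OF cT cTi cM2 cMi2] TTi M2Mi2 by simp
  have MiM: "Minv * M = 1\<^sub>m (a+e)"
    unfolding M_def Minv_def fbd_mult[OF cTi cT cMi2 cM2] TTi Mi2M2 by simp
  have inv: "invertible_mat M"
    unfolding invertible_mat_def inverts_mat_def using cM cMinv MMi MiM
    by (intro conjI exI[of _ Minv]) auto
  have minv: "mat_inv M = Minv"
  proof -
    have "mat_inverse M \<noteq> None"
    proof
      assume "mat_inverse M = None"
      from mat_inverse(1)[OF cM this] have "M \<notin> Units (ring_mat TYPE(real) (a+e) ())" .
      moreover have "M \<in> Units (ring_mat TYPE(real) (a+e) ())"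
        unfolding Units_def ring_mat_def using cM cMinv MMi MiM by auto
      ultimately show False by simp
    qed
    then obtain B where B: "mat_inverse M = Some B" by auto
    from mat_inverse(2)[OF cM B] have BM: "B * M = 1\<^sub>m (a+e)" and cB: "B \<in> carrier_mat (a+e) (a+e)" by auto
    have "B = B * (M * Minv)" using MMi cB by simp
    also have "\<dots> = (B * M) * Minv" using cB cM cMinv by (simp add: assoc_mult_mat)
    also have "\<dots> = Minv" using BM cMinv by simp
    finally show ?thesis unfolding mat_inv_def B by simp
  qed
  have cmWt: "- Wt \<in> carrier_mat b c" using cWt by simp
  have cmW: "- W \<in> carrier_mat c b" using W by simp
  have cmWG: "- (W * G) \<in> carrier_mat c b" using W cG by simp
  have YTi_c: "Y * Ti \<in> carrier_mat a a" using cY cTi by simp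
  have QMi: "Q * Minv = four_block_mat (Y * Ti) (0\<^sub>m a e) (0\<^sub>m e a) (four_block_mat Gi (0\<^sub>m b c) (0\<^sub>m c b) bI)"
  proof -
    have "Q2 * Mi2 = four_block_mat (Gi * 1\<^sub>m b + - Wt * 0\<^sub>m c b) (Gi * (G * Wt) + - Wt * 1\<^sub>m c)
       (0\<^sub>m c b * 1\<^sub>m b + bI * 0\<^sub>m c b) (0\<^sub>m c b * (G * Wt) + bI * 1\<^sub>m c)"
      unfolding Q2_def Mi2_def by (rule mult_four_block_mat[OF cGi cmWt zero_carrier_mat cbI
         one_carrier_mat cGWt zero_carrier_mat one_carrier_mat])
    also have "\<dots> = four_block_mat Gi (0\<^sub>m b c) (0\<^sub>m c b) bI"
    proof -
      have "Gi * (G * Wt) = Wt" using assoc_mult_mat[OF cGi cG cWt] GGi cWt by simp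
      thus ?thesis using cGi cWt cbI
        by (intro cong_four_block_mat) (simp_all add: carrier_matD[OF cGi] carrier_matD[OF cWt] carrier_matD[OF cbI] carrier_matD[OF cG] carrier_matD[OF cGWt] carrier_matD[OF W])
    qed
    finally show ?thesis unfolding Q_def Minv_def fbd_mult[OF cY cTi cQ2 cMi2] by simp
  qed
  have cH: "Q * Minv \<in> carrier_mat (a+e) (a+e)" using cQ cMinv by simp
  have HM: "Q * Minv * M = Q"
    using assoc_mult_mat[OF cQ cMinv cM] MiM cQ by simp
  have MtHM: "transpose_mat M * (Q * Minv) * M = transpose_mat M * Q"
    using assoc_mult_mat[of "transpose_mat M" "a+e" "a+e" "Q * Minv" "a+e" M "a+e"] cM cH HM by simp
  have WG: "W * G \<in> carrier_mat c b" using W cG by simp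
  have M2t: "transpose_mat M2 = four_block_mat (1\<^sub>m b) (0\<^sub>m b c) (- (W * G)) (1\<^sub>m c)"
  proof -
    have "transpose_mat (G * Wt) = W * G"
      unfolding Wt_def G_def using W by (subst transpose_mult[of _ b b]) auto
    thus ?thesis unfolding M2_def using cGWt
      by (subst transpose_four_block_mat) (auto simp: transpose_uminus)
  qed
  have cbIt: "transpose_mat bI = bI" unfolding bI_def by (rule eq_matI) auto
  have Q2t: "transpose_mat Q2 = four_block_mat Gi (0\<^sub>m b c) (- W) bI"
    unfolding Q2_def Wt_def Gi_def using W cbIt cbI
    by (subst transpose_four_block_mat) (auto simp: transpose_uminus)
  have Mt: "transpose_mat M = four_block_mat T (0\<^sub>m a e) (0\<^sub>m e a) (transpose_mat M2)"
    unfolding M_def T_def by (subst transpose_fbd[OF _ cM2]) auto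
  have Qt: "transpose_mat Q = four_block_mat Y (0\<^sub>m a e) (0\<^sub>m e a) (transpose_mat Q2)"
    unfolding Q_def Y_def by (subst transpose_fbd[OF _ cQ2]) auto
  have cM2t: "transpose_mat M2 \<in> carrier_mat e e" using cM2 by simp
  have cQ2t: "transpose_mat Q2 \<in> carrier_mat e e" using cQ2 by simp
  have M2tQ2: "transpose_mat M2 * Q2 = four_block_mat Gi (- Wt) (- W) (X + bI)"
  proof -
    have "transpose_mat M2 * Q2 = four_block_mat (1\<^sub>m b * Gi + 0\<^sub>m b c * 0\<^sub>m c b) (1\<^sub>m b * - Wt + 0\<^sub>m b c * bI)
       (- (W * G) * Gi + 1\<^sub>m c * 0\<^sub>m c b) (- (W * G) * - Wt + 1\<^sub>m c * bI)"
      unfolding M2t Q2_def by (rule mult_four_block_mat[OF one_carrier_mat zero_carrier_mat cmWG one_carrier_mat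
         cGi cmWt zero_carrier_mat cbI])
    also have "\<dots> = four_block_mat Gi (- Wt) (- W) (X + bI)"
    proof -
      have "W * G * Gi = W" using assoc_mult_mat[OF W cG cGi] GGi W by simp
      moreover have "- (W * G) * - Wt = X"
      proof -
        have "- (W * G) * - Wt = - ((W * G) * - Wt)"
          by (rule uminus_mult_left_mat) (use W cG cWt in simp)
        also have "(W * G) * - Wt = - (W * G * Wt)"
          by (rule uminus_mult_right_mat) (use W cG cWt in simp)
        finally show ?thesis unfolding X_def by simp
      qed
      ultimately show ?thesis using cGi cWt cbI WG W
        by (intro cong_four_block_mat) (simp_all add: carrier_matD[OF cGi] carrier_matD[OF cWt] carrier_matD[OF cbI] carrier_matD[OF cG] carrier_matD[OF cGWt] carrier_matD[OF W])
    qed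
    finally show ?thesis .
  qed
  define D1 where "D1 = dg (\<lambda>j. 1/al j + 1/al j - th j * (1/al j)) a"
  have D1e: "Y + Y - T * Y = D1" unfolding D1_def Y_def T_def dg_mult dg_add dg_minus ..
  have cD1: "D1 \<in> carrier_mat a a" unfolding D1_def by simp
  have cX': "bI - X \<in> carrier_mat c c" by (rule minus_carrier_mat[OF cX])
  have cInner: "four_block_mat Gi (0\<^sub>m b c) (0\<^sub>m c b) (bI - X) \<in> carrier_mat e e"
    unfolding e_def using cGi cX' by auto
  have De: "transpose_mat Q + Q - transpose_mat M * (Q * Minv) * M
      = four_block_mat D1 (0\<^sub>m a e) (0\<^sub>m e a) (four_block_mat Gi (0\<^sub>m b c) (0\<^sub>m c b) (bI - X))"
  proof -
    have s2: "transpose_mat M * Q = four_block_mat (T * Y) (0\<^sub>m a e) (0\<^sub>m e a) (transpose_mat M2 * Q2)"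
      unfolding Mt Q_def by (rule fbd_mult[OF cT cY cM2t cQ2])
    have s1: "transpose_mat Q + Q = four_block_mat (Y + Y) (0\<^sub>m a e) (0\<^sub>m e a) (transpose_mat Q2 + Q2)"
      using fbd_add[OF cY cY cQ2t cQ2] Qt by (simp add: Q_def[symmetric])
    have cYY: "Y + Y \<in> carrier_mat a a" using cY by simp
    have cTY: "T * Y \<in> carrier_mat a a" using cT cY by simp
    have cQQ: "transpose_mat Q2 + Q2 \<in> carrier_mat e e" using cQ2 by simp
    have cMQ: "transpose_mat M2 * Q2 \<in> carrier_mat e e" using cM2t cQ2 by simp
    have "transpose_mat Q + Q - transpose_mat M * (Q * Minv) * M
       = four_block_mat (Y + Y - T * Y) (0\<^sub>m a e) (0\<^sub>m e a) (transpose_mat Q2 + Q2 - transpose_mat M2 * Q2)"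
      unfolding MtHM s1 s2 by (rule fbd_minus[OF cYY cTY cQQ cMQ])
    also have "transpose_mat Q2 + Q2 - transpose_mat M2 * Q2 = four_block_mat Gi (0\<^sub>m b c) (0\<^sub>m c b) (bI - X)"
    proof -
      have "transpose_mat Q2 + Q2 = four_block_mat (Gi + Gi) (0\<^sub>m b c + - Wt) (- W + 0\<^sub>m c b) (bI + bI)"
      proof -
        have "transpose_mat Q2 + Q2 = four_block_mat Gi (0\<^sub>m b c) (- W) bI + four_block_mat Gi (- Wt) (0\<^sub>m c b) bI"
          unfolding Q2t by (simp add: Q2_def)
        also have "\<dots> = four_block_mat (Gi + Gi) (0\<^sub>m b c + - Wt) (- W + 0\<^sub>m c b) (bI + bI)"
          by (rule fb_add[OF cGi zero_carrier_mat cmW cbI cGi cmWt zero_carrier_mat cbI])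
        finally show ?thesis .
      qed
      also have "\<dots> - transpose_mat M2 * Q2 = four_block_mat (Gi + Gi - Gi) (0\<^sub>m b c + - Wt - - Wt)
          (- W + 0\<^sub>m c b - - W) (bI + bI - (X + bI))"
        unfolding M2tQ2 by (rule fb_minus[OF add_carrier_mat[OF cGi] add_carrier_mat[OF cmWt]
          add_carrier_mat[OF zero_carrier_mat] add_carrier_mat[OF cbI] cGi cmWt cmW add_carrier_mat[OF cbI]])
      also have "\<dots> = four_block_mat Gi (0\<^sub>m b c) (0\<^sub>m c b) (bI - X)"
        using cGi cWt cbI W cX
        by (intro cong_four_block_mat) (simp_all add: carrier_matD[OF cGi] carrier_matD[OF cWt] carrier_matD[OF cbI] carrier_matD[OF cG] carrier_matD[OF cGWt] carrier_matD[OF W] carrier_matD[OF cX] aam_mat[OF cGi] bbx_mat[OF cbI cX])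
      finally show ?thesis .
    qed
    finally show ?thesis unfolding D1e .
  qed
  define E1 where "E1 = dg (\<lambda>j. 1/al j * (1/th j) - (1/al j + 1/al j - th j * (1/al j))) a"
  have cH2: "four_block_mat Gi (0\<^sub>m b c) (0\<^sub>m c b) bI \<in> carrier_mat e e"
    unfolding e_def using cGi cbI by auto
  have HDe: "Q * Minv - (transpose_mat Q + Q - transpose_mat M * (Q * Minv) * M)
      = four_block_mat E1 (0\<^sub>m a e) (0\<^sub>m e a) (four_block_mat (0\<^sub>m b b) (0\<^sub>m b c) (0\<^sub>m c b) X)"
  proof -
    have "Q * Minv - (transpose_mat Q + Q - transpose_mat M * (Q * Minv) * M)
      = four_block_mat (Y * Ti - D1) (0\<^sub>m a e) (0\<^sub>m e a) (four_block_mat Gi (0\<^sub>m b c) (0\<^sub>m c b) bI - four_block_mat Gi (0\<^sub>m b c) (0\<^sub>m c b) (bI - X))"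
      unfolding De unfolding QMi by (rule fbd_minus[OF YTi_c cD1 cH2 cInner])
    also have "four_block_mat Gi (0\<^sub>m b c) (0\<^sub>m c b) bI - four_block_mat Gi (0\<^sub>m b c) (0\<^sub>m c b) (bI - X)
       = four_block_mat (0\<^sub>m b b) (0\<^sub>m b c) (0\<^sub>m c b) X"
      using cGi cbI cX cX' by (intro eq_matI) (auto simp: carrier_matD[OF cGi] carrier_matD[OF cbI] carrier_matD[OF cX])
    also have "Y * Ti - D1 = E1" unfolding Y_def Ti_def D1_def E1_def dg_mult dg_minus ..
    finally show ?thesis .
  qed
  have pdD: "pd (transpose_mat Q + Q - transpose_mat M * (Q * Minv) * M)"
  proof -
    have "pd D1" unfolding D1_def
    proof (rule pd_dg, intro allI impI)
      fix j assume j: "j < a"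
      have "al j > 0" using al j by simp
      hence "1/al j + 1/al j - th j * (1/al j) = (2 - th j) / al j" by (simp add: field_simps)
      thus "0 < 1/al j + 1/al j - th j * (1/al j)" using th al j by simp
    qed
    moreover have "pd Gi" unfolding Gi_def by (rule pd_dg) (use ga in simp)
    moreover have "pd (bI - X)" using D3 unfolding bI_def X_def G_def Wt_def .
    ultimately show ?thesis unfolding De
      by (intro pd_fbd[OF cD1 cInner] pd_fbd[OF cGi cX'])
  qed
  have psdHD: "psd (Q * Minv - (transpose_mat Q + Q - transpose_mat M * (Q * Minv) * M))"
  proof -
    have "psd E1" unfolding E1_def
    proof (rule psd_dg, intro allI impI)
      fix j assume j: "j < a"
      have p: "al j > 0" "th j > 0" using th al j by auto
      hence "1/al j * (1/th j) - (1/al j + 1/al j - th j * (1/al j)) = (1 - th j)^2 / (al j * th j)"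
        by (simp add: field_simps power2_eq_square)
      moreover have "0 \<le> (1 - th j)^2 / (al j * th j)" using p by simp
      ultimately show "0 \<le> 1/al j * (1/th j) - (1/al j + 1/al j - th j * (1/al j))" by simp
    qed
    moreover have "psd (0\<^sub>m b b)" unfolding dg_zero by (rule psd_dg) simp
    moreover have "psd X" unfolding X_def G_def Wt_def by (rule psd_congr[OF W]) (use ga in auto)
    moreover have "four_block_mat (0\<^sub>m b b) (0\<^sub>m b c) (0\<^sub>m c b) X \<in> carrier_mat e e"
      unfolding e_def using cX by auto
    ultimately show ?thesis unfolding HDe E1_def using cX
      by (intro psd_fbd[OF _ _] psd_fbd[OF zero_carrier_mat cX]) (auto simp: e_def)
  qed
  have loew: "loewner_ge (Q * Minv) (transpose_mat Q + Q - transpose_mat M * (Q * Minv) * M)"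
  proof -
    have "transpose_mat Q + Q - transpose_mat M * (Q * Minv) * M \<in> carrier_mat (a+e) (a+e)"
      unfolding De by (rule four_block_carrier_mat[OF cD1 cInner])
    thus ?thesis unfolding loewner_ge_def using psdHD cH carrier_matD[OF cQ] carrier_matD[OF cM] carrier_matD[OF cMinv] by auto
  qed
  show ?thesis unfolding Let_def Qe Me minv using inv loew pdD by simp
qed

lemma congr_quad:
  fixes W :: "real mat"
  assumes W: "W \<in> carrier_mat c b" and v: "v \<in> carrier_vec c"
  shows "v \<bullet> ((W * dg ga b * transpose_mat W) *\<^sub>v v) = (\<Sum>i<b. ga i * ((transpose_mat W *\<^sub>v v) $ i)^2)"
proof -
  have cG: "dg ga b \<in> carrier_mat b b" by simp
  have cWt: "transpose_mat W \<in> carrier_mat b c" using W by simp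
  define z where "z = transpose_mat W *\<^sub>v v"
  have zc: "z \<in> carrier_vec b" unfolding z_def using W v by simp
  have WG: "W * dg ga b \<in> carrier_mat c b" using W by simp
  have "(W * dg ga b * transpose_mat W) *\<^sub>v v = (W * dg ga b) *\<^sub>v z"
    unfolding z_def by (rule assoc_mult_mat_vec[OF WG cWt v])
  also have "\<dots> = W *\<^sub>v (dg ga b *\<^sub>v z)" by (rule assoc_mult_mat_vec[OF W cG zc])
  finally have "v \<bullet> ((W * dg ga b * transpose_mat W) *\<^sub>v v) = v \<bullet> (W *\<^sub>v (dg ga b *\<^sub>v z))" by simp
  also have "\<dots> = z \<bullet> (dg ga b *\<^sub>v z)"
    using transpose_vec_mult_scalar[OF W mult_mat_vec_carrier[OF cG zc] v] unfolding z_def by simp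
  also have "\<dots> = (\<Sum>i<b. ga i * (z $ i)^2)" by (rule dg_quad[OF zc])
  finally show ?thesis unfolding z_def .
qed

lemma vv_pos: fixes v :: "real vec" assumes "v \<in> carrier_vec c" "v \<noteq> 0\<^sub>v c" shows "v \<bullet> v > 0"
proof -
  have "pd (dg (\<lambda>_. 1) c)" by (rule pd_dg) simp
  hence "0 < v \<bullet> (dg (\<lambda>_. 1) c *\<^sub>v v)" using assms unfolding pd_def by simp
  thus ?thesis unfolding dg_one[symmetric] using assms by simp
qed

lemma D3_pd:
  fixes W :: "real mat"
  assumes W: "W \<in> carrier_mat c b" and \<beta>: "\<beta> > 0" and lam: "lam > 0"
    and hb: "\<forall>v\<in>carrier_vec c. (transpose_mat W *\<^sub>v v) \<bullet> (transpose_mat W *\<^sub>v v) \<le> lam * (v \<bullet> v)"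
    and ga: "\<forall>j<b. 0 < ga j \<and> ga j \<le> K" and K: "K * lam * \<beta> < 1" and K0: "K \<ge> 0"
  shows "pd ((1/\<beta>) \<cdot>\<^sub>m 1\<^sub>m c - W * dg ga b * transpose_mat W)"
  unfolding pd_def
proof (intro conjI ballI impI)
  define X where "X = W * dg ga b * transpose_mat W"
  have cWt: "transpose_mat W \<in> carrier_mat b c" using W by simp
  have cX: "X \<in> carrier_mat c c" unfolding X_def by (rule mult_carrier_mat[OF mult_carrier_mat[OF W dg_carrier] cWt])
  have psX: "psd X" unfolding X_def by (rule psd_congr[OF W]) (use ga in auto)
  have cbI: "(1/\<beta>) \<cdot>\<^sub>m 1\<^sub>m c \<in> carrier_mat c c" by simp
  show "square_mat ((1/\<beta>) \<cdot>\<^sub>m 1\<^sub>m c - W * dg ga b * transpose_mat W)" using W by simp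
  have "transpose_mat ((1/\<beta>) \<cdot>\<^sub>m 1\<^sub>m c - X) = transpose_mat ((1/\<beta>) \<cdot>\<^sub>m 1\<^sub>m c) - transpose_mat X"
    by (rule transpose_minus[OF cbI cX])
  also have "\<dots> = (1/\<beta>) \<cdot>\<^sub>m 1\<^sub>m c - X"
    using psX unfolding psd_def by (simp add: dg_smult_one)
  finally show "transpose_mat ((1/\<beta>) \<cdot>\<^sub>m 1\<^sub>m c - W * dg ga b * transpose_mat W) = (1/\<beta>) \<cdot>\<^sub>m 1\<^sub>m c - W * dg ga b * transpose_mat W"
    unfolding X_def .
  fix v :: "real vec"
  assume "v \<in> carrier_vec (dim_row ((1/\<beta>) \<cdot>\<^sub>m 1\<^sub>m c - W * dg ga b * transpose_mat W))"
    and "v \<noteq> 0\<^sub>v (dim_row ((1/\<beta>) \<cdot>\<^sub>m 1\<^sub>m c - W * dg ga b * transpose_mat W))"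
  hence v: "v \<in> carrier_vec c" and ne: "v \<noteq> 0\<^sub>v c" using W by auto
  have vv: "v \<bullet> v > 0" by (rule vv_pos[OF v ne])
  define z where "z = transpose_mat W *\<^sub>v v"
  have "v \<bullet> (X *\<^sub>v v) = (\<Sum>i<b. ga i * (z $ i)^2)" unfolding X_def z_def by (rule congr_quad[OF W v])
  also have "\<dots> \<le> (\<Sum>i<b. K * (z $ i)^2)"
    by (rule sum_mono) (use ga in \<open>auto intro: mult_right_mono\<close>)
  also have "\<dots> = K * (z \<bullet> z)"
    unfolding z_def using W by (simp add: sum_distrib_left scalar_prod_def atLeast0LessThan power2_eq_square)
  also have "\<dots> \<le> K * (lam * (v \<bullet> v))"
  proof -
    show ?thesis using hb v K0 unfolding z_def by (intro mult_left_mono) auto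
  qed
  also have "\<dots> < (1/\<beta>) * (v \<bullet> v)"
  proof -
    have "K * lam < 1/\<beta>" using K \<beta> by (simp add: field_simps)
    hence "(K * lam) * (v \<bullet> v) < (1/\<beta>) * (v \<bullet> v)" using vv by (rule mult_strict_right_mono)
    thus ?thesis by (simp add: mult.assoc)
  qed
  finally have lt: "v \<bullet> (X *\<^sub>v v) < (1/\<beta>) * (v \<bullet> v)" .
  have "((1/\<beta>) \<cdot>\<^sub>m 1\<^sub>m c - X) *\<^sub>v v = ((1/\<beta>) \<cdot>\<^sub>m 1\<^sub>m c) *\<^sub>v v - X *\<^sub>v v"
    by (rule minus_mult_distrib_mat_vec[OF cbI cX v])
  hence "v \<bullet> (((1/\<beta>) \<cdot>\<^sub>m 1\<^sub>m c - X) *\<^sub>v v) = v \<bullet> (((1/\<beta>) \<cdot>\<^sub>m 1\<^sub>m c) *\<^sub>v v) - v \<bullet> (X *\<^sub>v v)"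
    using scalar_prod_minus_distrib[OF v mult_mat_vec_carrier[OF cbI v] mult_mat_vec_carrier[OF cX v]] by simp
  also have "v \<bullet> (((1/\<beta>) \<cdot>\<^sub>m 1\<^sub>m c) *\<^sub>v v) = (1/\<beta>) * (v \<bullet> v)"
    unfolding dg_smult_one dg_quad[OF v] using v
    by (simp add: scalar_prod_def sum_distrib_left atLeast0LessThan power2_eq_square)
  finally show "0 < v \<bullet> (((1/\<beta>) \<cdot>\<^sub>m 1\<^sub>m c - W * dg ga b * transpose_mat W) *\<^sub>v v)"
    using lt unfolding X_def by simp
qed

theorem proposition2:
  fixes m r p q :: nat
    and nn :: "nat \<Rightarrow> nat"
    and \<theta> \<alpha> \<gamma> :: "nat \<Rightarrow> real"
    and \<beta> :: real
    and L U :: "real mat"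
  assumes m: "m \<ge> 2"
    and nn_pos: "\<forall>i<m. nn i \<ge> 1"
    and U_dim: "U \<in> carrier_mat r m"
    and U_rank: "vec_space.rank r U = r"
    and U_one: "U *\<^sub>v vec m (\<lambda>_. 1) = 0\<^sub>v r"
    and L_def: "L = transpose_mat U * U"
    and L_null: "mat_kernel L = {c \<cdot>\<^sub>v vec m (\<lambda>_. 1) | c. True}"
    and \<beta>_pos: "\<beta> > 0"
    and \<theta>_range: "\<forall>i<m. 0 < \<theta> i \<and> \<theta> i < 2"
    and \<alpha>_pos: "\<forall>i<m. \<alpha> i > 0"
    and \<gamma>_pos: "\<forall>i<m. \<gamma> i > 0"
    and step: "\<forall>i<m. 0 < \<gamma> i * \<beta> \<and> \<gamma> i * \<beta> < 1 / lambda_max L"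
  shows
    "let n = (\<Sum>i<m. nn i); d = p + q;
         \<Theta> = diag_block_mat (map (\<lambda>i. \<theta> i \<cdot>\<^sub>m 1\<^sub>m (nn i)) [0..<m]);
         \<Upsilon>inv = diag_block_mat (map (\<lambda>i. (1 / \<alpha> i) \<cdot>\<^sub>m 1\<^sub>m (nn i)) [0..<m]);
         \<Gamma> = diag_block_mat (map (\<lambda>i. \<gamma> i \<cdot>\<^sub>m 1\<^sub>m d) [0..<m]);
         \<Gamma>inv = diag_block_mat (map (\<lambda>i. (1 / \<gamma> i) \<cdot>\<^sub>m 1\<^sub>m d) [0..<m]);
         UU = kron U (1\<^sub>m d);
         Q = block3 \<Upsilon>inv (0\<^sub>m n (m * d)) (0\<^sub>m n (r * d))
                    (0\<^sub>m (m * d) n) \<Gamma>inv (- transpose_mat UU)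
                    (0\<^sub>m (r * d) n) (0\<^sub>m (r * d) (m * d)) ((1 / \<beta>) \<cdot>\<^sub>m 1\<^sub>m (r * d));
         M = block3 \<Theta> (0\<^sub>m n (m * d)) (0\<^sub>m n (r * d))
                    (0\<^sub>m (m * d) n) (1\<^sub>m (m * d)) (- (\<Gamma> * transpose_mat UU))
                    (0\<^sub>m (r * d) n) (0\<^sub>m (r * d) (m * d)) (1\<^sub>m (r * d));
         H = Q * mat_inv M;
         D = transpose_mat Q + Q - transpose_mat M * H * M
     in invertible_mat M \<and> loewner_ge H D \<and> pd D"
proof -
  define n where "n = (\<Sum>i<m. nn i)"
  define d where "d = p + q"
  define th where "th = bf \<theta> nn [0..<m]"
  define al where "al = bf \<alpha> nn [0..<m]"
  define ga where "ga = bf \<gamma> (\<lambda>_. d) [0..<m]"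
  define W where "W = kron U (1\<^sub>m d)"
  define lam where "lam = lambda_max L"
  have m0: "m > 0" using m by simp
  have sn: "sum_list (map nn [0..<m]) = n"
    unfolding n_def by (simp add: sum_set_upt_conv_sum_list_nat[symmetric] atLeast0LessThan)
  have sd: "sum_list (map (\<lambda>_. d) [0..<m]) = m * d" by (simp add: sum_list_triv)
  have eT: "diag_block_mat (map (\<lambda>i. \<theta> i \<cdot>\<^sub>m 1\<^sub>m (nn i)) [0..<m]) = dg th n"
    using diag_block_dg[of \<theta> nn "[0..<m]"] unfolding sn th_def .
  have eY: "diag_block_mat (map (\<lambda>i. (1 / \<alpha> i) \<cdot>\<^sub>m 1\<^sub>m (nn i)) [0..<m]) = dg (\<lambda>j. 1 / al j) n"
    using diag_block_dg[of "\<lambda>i. 1 / \<alpha> i" nn "[0..<m]"] unfolding sn al_def bf_inv .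
  have eG: "diag_block_mat (map (\<lambda>i. \<gamma> i \<cdot>\<^sub>m 1\<^sub>m d) [0..<m]) = dg ga (m * d)"
    using diag_block_dg[of \<gamma> "\<lambda>_. d" "[0..<m]"] unfolding sd ga_def .
  have eGi: "diag_block_mat (map (\<lambda>i. (1 / \<gamma> i) \<cdot>\<^sub>m 1\<^sub>m d) [0..<m]) = dg (\<lambda>j. 1 / ga j) (m * d)"
    using diag_block_dg[of "\<lambda>i. 1 / \<gamma> i" "\<lambda>_. d" "[0..<m]"] unfolding sd ga_def bf_inv .
  have thP: "\<forall>j<n. 0 < th j \<and> th j < 2"
  proof (intro allI impI)
    fix j assume "j < n"
    then obtain i where "i \<in> set [0..<m]" "th j = \<theta> i" using bf_in[of j nn "[0..<m]" \<theta>] sn th_def by auto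
    thus "0 < th j \<and> th j < 2" using \<theta>_range by auto
  qed
  have alP: "\<forall>j<n. al j > 0"
  proof (intro allI impI)
    fix j assume "j < n"
    then obtain i where "i \<in> set [0..<m]" "al j = \<alpha> i" using bf_in[of j nn "[0..<m]" \<alpha>] sn al_def by auto
    thus "al j > 0" using \<alpha>_pos by auto
  qed
  have gaI: "\<exists>i<m. ga j = \<gamma> i" if "j < m * d" for j
    using bf_in[of j "\<lambda>_. d" "[0..<m]" \<gamma>] sd ga_def that by auto
  have cL: "L \<in> carrier_mat m m" unfolding L_def using U_dim by simp
  have symL: "transpose_mat L = L"
    unfolding L_def using U_dim by (simp add: transpose_mult[of _ m r])
  have quadL: "y \<bullet> (L *\<^sub>v y) = (U *\<^sub>v y) \<bullet> (U *\<^sub>v y)" if y: "y \<in> carrier_vec m" for y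
  proof -
    have cUt: "transpose_mat U \<in> carrier_mat m r" using U_dim by simp
    have Uy: "U *\<^sub>v y \<in> carrier_vec r" using U_dim y by simp
    have "L *\<^sub>v y = transpose_mat U *\<^sub>v (U *\<^sub>v y)"
      unfolding L_def by (rule assoc_mult_mat_vec[OF cUt U_dim y])
    hence "y \<bullet> (L *\<^sub>v y) = y \<bullet> (transpose_mat U *\<^sub>v (U *\<^sub>v y))" by simp
    also have "\<dots> = (transpose_mat (transpose_mat U) *\<^sub>v y) \<bullet> (U *\<^sub>v y)"
      using transpose_vec_mult_scalar[OF cUt Uy y] by simp
    finally show ?thesis by simp
  qed
  have ray: "\<forall>y\<in>carrier_vec m. y \<bullet> (L *\<^sub>v y) \<le> lam * (y \<bullet> y)"
    unfolding lam_def by (rule rayleigh_lambda_max[OF cL m0 symL])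
  have lam: "lam > 0"
  proof -
    have "0 < \<gamma> 0 * \<beta> \<and> \<gamma> 0 * \<beta> < 1 / lambda_max L" using step m0 by blast
    hence "0 < 1 / lam" unfolding lam_def by linarith
    thus ?thesis by simp
  qed
  have hbU: "\<forall>y\<in>carrier_vec m. (U *\<^sub>v y) \<bullet> (U *\<^sub>v y) \<le> lam * (y \<bullet> y)"
    using ray quadL by simp
  have hbUT: "\<forall>w\<in>carrier_vec r. (transpose_mat U *\<^sub>v w) \<bullet> (transpose_mat U *\<^sub>v w) \<le> lam * (w \<bullet> w)"
    using UT_bound[OF U_dim lam hbU] by blast
  have hbW: "\<forall>v\<in>carrier_vec (r * d). (transpose_mat W *\<^sub>v v) \<bullet> (transpose_mat W *\<^sub>v v) \<le> lam * (v \<bullet> v)"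
    unfolding W_def using kron_bound[OF U_dim hbUT] by blast
  have cW: "W \<in> carrier_mat (r * d) (m * d)" unfolding W_def kron_def using U_dim by auto
  define K where "K = Max (\<gamma> ` {..<m})"
  have Kge: "\<gamma> i \<le> K" if "i < m" for i unfolding K_def using that by (intro Max_ge) auto
  have "K \<in> \<gamma> ` {..<m}" unfolding K_def using m0 by (intro Max_in) auto
  then obtain i0 where i0: "i0 < m" "K = \<gamma> i0" by auto
  have K0: "K \<ge> 0" using i0 \<gamma>_pos by auto
  have KK: "K * lam * \<beta> < 1"
  proof -
    have "K * \<beta> < 1 / lam" using step i0 unfolding lam_def by auto
    hence "K * \<beta> * lam < 1 / lam * lam" using lam by (rule mult_strict_right_mono)
    thus ?thesis using lam by (simp add: algebra_simps)
  qed
  have gaK: "\<forall>j<m * d. 0 < ga j \<and> ga j \<le> K"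
    using gaI \<gamma>_pos Kge by fastforce
  have D3: "pd ((1/\<beta>) \<cdot>\<^sub>m 1\<^sub>m (r * d) - W * dg ga (m * d) * transpose_mat W)"
    by (rule D3_pd[OF cW \<beta>_pos lam hbW gaK KK K0])
  have gaP: "\<forall>j<m * d. ga j > 0" using gaK by blast
  note C = core[OF cW \<beta>_pos thP alP gaP D3, unfolded Let_def]
  show ?thesis
    unfolding Let_def n_def[symmetric] d_def[symmetric] eT eY eG eGi W_def[symmetric]
    using C by simp
qed

end
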